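(* Let $S\colon[0,1]\to\mathfrak S_1(\mathbb T)$ be a continuous path with $S(0)=\mathbf 1$, let $\tilde S\colon[0,1]\to\mathfrak S_1(\mathbb R)$ be a continuous lift of $S$ with $\tilde S(0)=\mathbf 0$, and let $\theta_1(\cdot),\theta_2(\cdot),\dots$ be a continuous enumeration of $\tilde S$. Then the function $\theta\mapsto\mu(\theta;S)$ is summable on $(0,2\pi)$ and $$\int_0^{2\pi}\mu(\theta;S)\,d\theta=\sum_{j=1}^\infty\theta_j(1).$$
   Context: Rigged sets: each point has a multiplicity in $\{0,1,\dots,\infty\}$; an enumeration lists each point according to its multiplicity. For a metric space $X$ with base point $x_0$, $\mathfrak S_1(X)$ is the set of countable rigged subsets of $X$ with $x_0$ of infinite multiplicity, no other accumulation point, and $d(S,\mathbf x_0)<\infty$, where $d(S,T)=\inf\sum_j\mathrm{dist}(s_j,t_j)$ over enumerations; $\mathfrak S_1(\mathbb T)$ has base point $1$ (arc-length metric), $\mathfrak S_1(\mathbb R)$ base point $0$; $\mathbf 1$, $\mathbf 0$ are the base points with infinite multiplicity. A lift of $S$ is $\tilde S$ with $p\circ\tilde S=S$, where $p$ is induced by $\theta\mapsto e^{i\theta}$. A continuous enumeration of $\tilde S$ is a sequence of continuous real functions $\theta_j$ such that for each $r$ the rigged set $\{\theta_j(r)\}$ together with $0$ of infinite multiplicity equals $\tilde S(r)$. For $\theta\in(0,2\pi)$, $\theta_1<\theta_2$: $[\theta;\theta_1,\theta_2]=\frac12(\#\{k\in\mathbb Z:\theta_1<\theta+2\pi k<\theta_2\}+\#\{k\in\mathbb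 Z:\theta_1\le\theta+2\pi k\le\theta_2\})$, antisymmetric in $(\theta_1,\theta_2)$. $\mu(\theta;S)=\sum_j[\theta;\theta_j(0),\theta_j(1)]$ (independent of the choice of lift and enumeration). *)

theory Defs
  imports "HOL-Analysis.Analysis" "HOL-Library.Extended_Nat"
begin

text \<open>Rigged sets: a rigged subset of a type is a multiplicity function into enat
  (\<infinity> = infinite multiplicity).\<close>

type_synonym 'a rigged = "'a \<Rightarrow> enat"

definition ecount :: "(nat \<Rightarrow> 'a) \<Rightarrow> 'a \<Rightarrow> enat" where
  "ecount s x = (if finite {j. s j = x} then enat (card {j. s j = x}) else \<infinity>)"

definition is_enum :: "'a rigged \<Rightarrow> (nat \<Rightarrow> 'a) \<Rightarrow> bool" where
  "is_enum M s \<longleftrightarrow> (\<forall>x. M x = ecount s x)"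

definition base :: "'a \<Rightarrow> 'a rigged" where
  "base x0 = (\<lambda>x. if x = x0 then \<infinity> else 0)"

definition rdist :: "('a \<Rightarrow> 'a \<Rightarrow> real) \<Rightarrow> 'a rigged \<Rightarrow> 'a rigged \<Rightarrow> ennreal" where
  "rdist \<delta> M N = (INF st \<in> {(s, t). is_enum M s \<and> is_enum N t}.
      (\<Sum>j. ennreal (\<delta> (fst st j) (snd st j))))"

definition S1 :: "'a::topological_space set \<Rightarrow> ('a \<Rightarrow> 'a \<Rightarrow> real) \<Rightarrow> 'a \<Rightarrow> 'a rigged set" where
  "S1 X \<delta> x0 = {M. (\<forall>x. x \<notin> X \<longrightarrow> M x = 0)
     \<and> countable {x. M x \<noteq> 0}
     \<and> M x0 = \<infinity>
     \<and> (\<forall>x. x \<noteq> x0 \<longrightarrow> M x \<noteq> \<infinity> \<and> \<not> (x islimpt {y. M y \<noteq> 0}))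
     \<and> rdist \<delta> M (base x0) < \<infinity>}"

definition arcdist :: "complex \<Rightarrow> complex \<Rightarrow> real" where
  "arcdist z w = \<bar>Arg (z / w)\<bar>"

definition S1_T :: "complex rigged set" where
  "S1_T = S1 (sphere 0 1) arcdist 1"

definition S1_R :: "real rigged set" where
  "S1_R = S1 UNIV dist 0"

definition rpath :: "'a::topological_space rigged set \<Rightarrow> ('a \<Rightarrow> 'a \<Rightarrow> real)
    \<Rightarrow> (real \<Rightarrow> 'a rigged) \<Rightarrow> bool" where
  "rpath Sp \<delta> P \<longleftrightarrow> (\<forall>r\<in>{0..1}. P r \<in> Sp) \<and>
     (\<forall>r\<in>{0..1}. \<forall>e>0. \<exists>d>0. \<forall>r'\<in>{0..1}. \<bar>r' - r\<bar> < d \<longrightarrow> rdist \<delta> (P r') (P r) < ennreal e)"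

definition pmap :: "real rigged \<Rightarrow> complex rigged" where
  "pmap M z = (SUP F \<in> {F. finite F \<and> F \<subseteq> {\<theta>. cis \<theta> = z}}. \<Sum>\<theta>\<in>F. M \<theta>)"

definition cont_enum :: "(real \<Rightarrow> real rigged) \<Rightarrow> (nat \<Rightarrow> real \<Rightarrow> real) \<Rightarrow> bool" where
  "cont_enum St th \<longleftrightarrow> (\<forall>j. continuous_on {0..1} (th j)) \<and>
     (\<forall>r\<in>{0..1}. \<forall>x. St r x = ecount (\<lambda>j. th j r) x + (if x = 0 then \<infinity> else 0))"

definition bracket0 :: "real \<Rightarrow> real \<Rightarrow> real \<Rightarrow> real" where
  "bracket0 \<theta> a b = (real (card {k::int. a < \<theta> + 2*pi*k \<and> \<theta> + 2*pi*k < b})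
       + real (card {k::int. a \<le> \<theta> + 2*pi*k \<and> \<theta> + 2*pi*k \<le> b})) / 2"

definition bracket :: "real \<Rightarrow> real \<Rightarrow> real \<Rightarrow> real" where
  "bracket \<theta> a b = (if a < b then bracket0 \<theta> a b else if b < a then - bracket0 \<theta> b a else 0)"

definition mu :: "(nat \<Rightarrow> real \<Rightarrow> real) \<Rightarrow> real \<Rightarrow> real" where
  "mu th \<theta> = (\<Sum>j. bracket \<theta> (th j 0) (th j 1))"

end

theory Submission
  imports Defs
begin
definition clamp :: "real \<Rightarrow> real" where "clamp x = max 0 (min (2*pi) x)"

lemma clamp_sum_zero: "x \<le> 0 \<Longrightarrow> (\<Sum>i<n. clamp (x - 2*pi*real i)) = 0"
proof (intro sum.neutral ballI)
  fix i assume "x \<le> 0"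
  moreover have "0 \<le> 2*pi*real i" using pi_gt_zero by simp
  ultimately have "x - 2*pi*real i \<le> 0" by linarith
  then show "clamp (x - 2*pi*real i) = 0" unfolding clamp_def by simp
qed

lemma clamp_sum: "0 \<le> x \<Longrightarrow> x \<le> 2*pi*real n \<Longrightarrow> (\<Sum>i<n. clamp (x - 2*pi*real i)) = x"
proof (induction n arbitrary: x)
  case 0 then show ?case by simp
next
  case (Suc n)
  have eq: "(\<Sum>i<Suc n. clamp (x - 2*pi*real i)) = clamp x + (\<Sum>i<n. clamp ((x - 2*pi) - 2*pi*real i))"
    by (subst sum.lessThan_Suc_shift) (simp add: algebra_simps)
  show ?case
  proof (cases "x \<ge> 2*pi")
    case True
    have "(\<Sum>i<n. clamp ((x - 2*pi) - 2*pi*real i)) = x - 2*pi"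
      using Suc True by (intro Suc.IH) (auto simp: algebra_simps)
    then show ?thesis using eq True unfolding clamp_def by simp
  next
    case False
    then show ?thesis using eq clamp_sum_zero[of "x - 2*pi" n] Suc.prems unfolding clamp_def by simp
  qed
qed

lemma sum_int_shift: "(\<Sum>k\<in>{m..<m+int n}. f k) = (\<Sum>i<n. f (m + int i))"
proof (induction n)
  case 0 then show ?case by simp
next
  case (Suc n)
  have "{m..<m+int (Suc n)} = insert (m + int n) {m..<m+int n}" by auto
  then show ?case using Suc by (simp add: add.commute)
qed

lemma clamp_sum_int:
  fixes m M :: int
  assumes "x - 2*pi*m \<ge> 0" "x \<le> 2*pi*M" "m \<le> M"
  shows "(\<Sum>k\<in>{m..<M}. clamp (x - 2*pi*k)) = x - 2*pi*m"
proof -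
  define n where "n = nat (M - m)"
  have M: "M = m + int n" using assms n_def by simp
  have "(\<Sum>k\<in>{m..<M}. clamp (x - 2*pi*k)) = (\<Sum>i<n. clamp ((x - 2*pi*m) - 2*pi*real i))"
    unfolding M sum_int_shift by (simp add: algebra_simps)
  also have "\<dots> = x - 2*pi*m"
    using assms by (intro clamp_sum) (auto simp: M algebra_simps)
  finally show ?thesis .
qed

lemma meas_Ioo: "a \<le> b \<Longrightarrow> measure lebesgue ({0<..<2*pi} \<inter> {a<..<b}) = clamp b - clamp a"
proof -
  assume ab: "a \<le> b"
  have "{0<..<2*pi} \<inter> {a<..<b} = {max 0 a<..<min (2*pi) b}" by auto
  moreover have "measure lebesgue {max 0 a<..<min (2*pi) b} = clamp b - clamp a"
  proof (cases "max 0 a \<le> min (2*pi) b")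
    case True then show ?thesis using ab by (simp add: clamp_def)
  next
    case False then show ?thesis using ab pi_gt_zero by (auto simp: clamp_def)
  qed
  ultimately show ?thesis by simp
qed

lemma meas_Icc: "a \<le> b \<Longrightarrow> measure lebesgue ({0<..<2*pi} \<inter> {a..b}) = clamp b - clamp a"
proof -
  assume ab: "a \<le> b"
  show ?thesis
  proof (cases "max 0 a \<le> min (2*pi) b")
    case True
    have "measure lebesgue {max 0 a<..<min (2*pi) b} \<le> measure lebesgue ({0<..<2*pi} \<inter> {a..b})"
      by (intro measure_mono_fmeasurable) auto
    moreover have "measure lebesgue ({0<..<2*pi} \<inter> {a..b}) \<le> measure lebesgue {max 0 a..min (2*pi) b}"
      by (intro measure_mono_fmeasurable) auto
    ultimately show ?thesis using True ab by (simp add: clamp_def)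
  next
    case False
    then have "{0<..<2*pi} \<inter> {a..b} = {}" by auto
    then show ?thesis using False ab pi_gt_zero by (auto simp: clamp_def)
  qed
qed
definition K0 :: "real \<Rightarrow> int" where "K0 a = \<lfloor>a/(2*pi)\<rfloor> - 1"
definition K1 :: "real \<Rightarrow> int" where "K1 b = \<lceil>b/(2*pi)\<rceil> + 1"

lemma K0_le: fixes k :: int assumes "a \<le> \<theta> + 2*pi*k" "\<theta> \<le> 2*pi" shows "K0 a \<le> k"
proof -
  have "a/(2*pi) \<le> k + 1" using assms pi_gt_zero by (simp add: divide_simps algebra_simps)
  then show ?thesis unfolding K0_def by linarith
qed

lemma K1_gt: fixes k :: int assumes "\<theta> + 2*pi*k \<le> b" "0 \<le> \<theta>" shows "k < K1 b"
proof -
  have "k \<le> b/(2*pi)" using assms pi_gt_zero by (simp add: divide_simps algebra_simps)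
  then show ?thesis unfolding K1_def by linarith
qed

lemma K0_K1: "a \<le> b \<Longrightarrow> K0 a \<le> K1 b"
  unfolding K0_def K1_def using pi_gt_zero
  by (smt (verit, ccfv_SIG) ceiling_correct divide_right_mono floor_le_ceiling floor_mono)

lemma card_open: assumes "0 \<le> \<theta>" "\<theta> \<le> 2*pi"
  shows "real (card {k::int. a < \<theta> + 2*pi*k \<and> \<theta> + 2*pi*k < b}) =
    (\<Sum>k\<in>{K0 a..<K1 b}. indicator {a - 2*pi*k<..<b - 2*pi*k} \<theta>)"
proof -
  have "{k::int. a < \<theta> + 2*pi*k \<and> \<theta> + 2*pi*k < b} = {K0 a..<K1 b} \<inter> {k. \<theta> \<in> {a - 2*pi*k<..<b - 2*pi*k}}"
    using K0_le[of a \<theta> _] K1_gt[of \<theta> _ b] assms by (auto simp: algebra_simps)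
  then show ?thesis by (simp add: indicator_def sum_of_bool_eq)
qed

lemma card_closed: assumes "0 \<le> \<theta>" "\<theta> \<le> 2*pi"
  shows "real (card {k::int. a \<le> \<theta> + 2*pi*k \<and> \<theta> + 2*pi*k \<le> b}) =
    (\<Sum>k\<in>{K0 a..<K1 b}. indicator {a - 2*pi*k..b - 2*pi*k} \<theta>)"
proof -
  have "{k::int. a \<le> \<theta> + 2*pi*k \<and> \<theta> + 2*pi*k \<le> b} = {K0 a..<K1 b} \<inter> {k. \<theta> \<in> {a - 2*pi*k..b - 2*pi*k}}"
    using K0_le[of a \<theta> _] K1_gt[of \<theta> _ b] assms by (auto simp: algebra_simps)
  then show ?thesis by (simp add: indicator_def sum_of_bool_eq)
qed

lemma K0_bound: "2*pi*K0 a \<le> a - 2*pi"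
proof -
  have "K0 a \<le> a/(2*pi) - 1" unfolding K0_def by linarith
  then show ?thesis using pi_gt_zero by (simp add: field_simps)
qed

lemma K1_bound: "b \<le> 2*pi*K1 b"
proof -
  have "b/(2*pi) \<le> K1 b" unfolding K1_def by linarith
  then show ?thesis using pi_gt_zero by (simp add: field_simps)
qed

lemma int_ind: "integrable lebesgue (indicator ({0<..<2*pi} \<inter> B) :: real \<Rightarrow> real)"
  if "B \<in> sets lebesgue"
proof -
  have "{0<..<2*pi} \<inter> B \<in> fmeasurable lebesgue"
    by (intro fmeasurable_Int_fmeasurable that) auto
  then show ?thesis by (auto simp: fmeasurable_def)
qed

lemma bracket0_int:
  assumes ab: "a < b"
  shows "set_integrable lebesgue {0<..<2*pi} (\<lambda>\<theta>. bracket0 \<theta> a b)"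
    "(LINT \<theta>:{0<..<2*pi}|lebesgue. bracket0 \<theta> a b) = b - a"
proof -
  define A where "A = {0<..<2*pi::real}"
  define F where "F = (\<lambda>\<theta>. \<Sum>k\<in>{K0 a..<K1 b}. (indicator (A \<inter> {a - 2*pi*k<..<b - 2*pi*k}) \<theta>
      + indicator (A \<inter> {a - 2*pi*k..b - 2*pi*k}) \<theta>) / (2::real))"
  have eq: "indicator A \<theta> *\<^sub>R bracket0 \<theta> a b = F \<theta>" for \<theta>
  proof (cases "\<theta> \<in> A")
    case True
    then have "0 \<le> \<theta>" "\<theta> \<le> 2*pi" by (auto simp: A_def)
    then show ?thesis using True
      unfolding F_def bracket0_def card_open[OF \<open>0 \<le> \<theta>\<close> \<open>\<theta> \<le> 2*pi\<close>] card_closed[OF \<open>0 \<le> \<theta>\<close> \<open>\<theta> \<le> 2*pi\<close>]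
      by (simp add: indicator_inter_arith flip: sum_divide_distrib sum.distrib)
  next
    case False
    then show ?thesis unfolding F_def by (simp add: indicator_inter_arith)
  qed
  have intF: "integrable lebesgue F"
    unfolding F_def A_def
  proof (rule Bochner_Integration.integrable_sum, rule integrable_divide_zero, rule Bochner_Integration.integrable_add)
    fix k :: int
    show "integrable lebesgue (indicat_real ({0<..<2 * pi} \<inter> {a - 2*pi*k<..<b - 2*pi*k}))"
      by (rule int_ind) auto
    show "integrable lebesgue (indicat_real ({0<..<2 * pi} \<inter> {a - 2*pi*k..b - 2*pi*k}))"
      by (rule int_ind) auto
  qed
  show "set_integrable lebesgue {0<..<2*pi} (\<lambda>\<theta>. bracket0 \<theta> a b)"
    unfolding set_integrable_def using intF eq A_def by simp
  have "(LINT \<theta>:{0<..<2*pi}|lebesgue. bracket0 \<theta> a b) = integral\<^sup>L lebesgue F"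
    unfolding set_lebesgue_integral_def using eq A_def by simp
  also have "\<dots> = (\<Sum>k\<in>{K0 a..<K1 b}. (clamp (b - 2*pi*k) - clamp (a - 2*pi*k)))"
  proof -
    have Ik: "integral\<^sup>L lebesgue (\<lambda>\<theta>. (indicator (A \<inter> {a - 2*pi*k<..<b - 2*pi*k}) \<theta>
      + indicator (A \<inter> {a - 2*pi*k..b - 2*pi*k}) \<theta>) / (2::real)) = clamp (b - 2*pi*k) - clamp (a - 2*pi*k)"
      for k :: int
    proof -
      have i1: "integrable lebesgue (indicat_real (A \<inter> {a - 2*pi*k<..<b - 2*pi*k}))"
        unfolding A_def by (rule int_ind) auto
      have i2: "integrable lebesgue (indicat_real (A \<inter> {a - 2*pi*k..b - 2*pi*k}))"
        unfolding A_def by (rule int_ind) auto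
      have m1: "measure lebesgue (A \<inter> {a - 2*pi*k<..<b - 2*pi*k}) = clamp (b - 2*pi*k) - clamp (a - 2*pi*k)"
        unfolding A_def using ab by (intro meas_Ioo) simp
      have m2: "measure lebesgue (A \<inter> {a - 2*pi*k..b - 2*pi*k}) = clamp (b - 2*pi*k) - clamp (a - 2*pi*k)"
        unfolding A_def using ab by (intro meas_Icc) simp
      show ?thesis
        by (simp only: integral_divide_zero Bochner_Integration.integral_add[OF i1 i2] Bochner_Integration.integral_indicator space_completion space_lborel space_borel Int_UNIV_right m1 m2) simp
    qed
    have "integral\<^sup>L lebesgue F = (\<Sum>k\<in>{K0 a..<K1 b}. integral\<^sup>L lebesgue (\<lambda>\<theta>. (indicator (A \<inter> {a - 2*pi*k<..<b - 2*pi*k}) \<theta>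
      + indicator (A \<inter> {a - 2*pi*k..b - 2*pi*k}) \<theta>) / (2::real)))"
      unfolding F_def
    proof (rule Bochner_Integration.integral_sum, rule integrable_divide_zero, rule Bochner_Integration.integrable_add)
      fix k :: int
      show "integrable lebesgue (indicat_real (A \<inter> {a - 2*pi*k<..<b - 2*pi*k}))"
        unfolding A_def by (rule int_ind) auto
      show "integrable lebesgue (indicat_real (A \<inter> {a - 2*pi*k..b - 2*pi*k}))"
        unfolding A_def by (rule int_ind) auto
    qed
    then show ?thesis by (simp only: Ik)
  qed
  also have "\<dots> = (b - 2*pi*K0 a) - (a - 2*pi*K0 a)"
  proof -
    have f: "2*pi*K0 a \<le> a" "2*pi*K0 a \<le> b" "a \<le> 2*pi*K1 b" "b \<le> 2*pi*K1 b"
      using K0_bound[of a] K1_bound[of b] ab pi_gt_zero by linarith+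
    show ?thesis unfolding sum_subtractf using f K0_K1[of a b] ab
      by (subst (1 2) clamp_sum_int) auto
  qed
  finally show "(LINT \<theta>:{0<..<2*pi}|lebesgue. bracket0 \<theta> a b) = b - a" by simp
qed

lemma bracket0_nonneg: "0 \<le> bracket0 \<theta> a b"
  unfolding bracket0_def by simp

lemma bracket_int:
  shows "set_integrable lebesgue {0<..<2*pi} (\<lambda>\<theta>. bracket \<theta> 0 b)"
    "(LINT \<theta>:{0<..<2*pi}|lebesgue. bracket \<theta> 0 b) = b"
    "(LINT \<theta>:{0<..<2*pi}|lebesgue. norm (bracket \<theta> 0 b)) = norm b"
proof -
  have "set_integrable lebesgue {0<..<2*pi} (\<lambda>\<theta>. bracket \<theta> 0 b) \<and>
    (LINT \<theta>:{0<..<2*pi}|lebesgue. bracket \<theta> 0 b) = b \<and>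
    (LINT \<theta>:{0<..<2*pi}|lebesgue. norm (bracket \<theta> 0 b)) = norm b"
  proof (cases "0 < b")
    case True
    then have e1: "(\<lambda>\<theta>. bracket \<theta> 0 b) = (\<lambda>\<theta>. bracket0 \<theta> 0 b)"
      and e2: "(\<lambda>\<theta>. norm (bracket \<theta> 0 b)) = (\<lambda>\<theta>. bracket0 \<theta> 0 b)"
      by (auto simp: bracket_def bracket0_nonneg)
    show ?thesis unfolding e1 e2 using bracket0_int[OF True] True by simp
  next
    case False
    show ?thesis
    proof (cases "b < 0")
      case True
      then have e1: "(\<lambda>\<theta>. bracket \<theta> 0 b) = (\<lambda>\<theta>. - bracket0 \<theta> b 0)"
        and e2: "(\<lambda>\<theta>. norm (bracket \<theta> 0 b)) = (\<lambda>\<theta>. bracket0 \<theta> b 0)"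
        by (auto simp: bracket_def bracket0_nonneg)
      have si: "set_integrable lebesgue {0<..<2*pi} (\<lambda>\<theta>. - bracket0 \<theta> b 0)"
        using bracket0_int(1)[OF True] unfolding set_integrable_def by simp
      show ?thesis unfolding e1 e2 using bracket0_int[OF True] True si
        by (simp add: set_integral_uminus)
    next
      case False
      then have "b = 0" using \<open>\<not> 0 < b\<close> by simp
      then show ?thesis by (simp add: bracket_def set_integrable_def)
    qed
  qed
  then show "set_integrable lebesgue {0<..<2*pi} (\<lambda>\<theta>. bracket \<theta> 0 b)"
    "(LINT \<theta>:{0<..<2*pi}|lebesgue. bracket \<theta> 0 b) = b"
    "(LINT \<theta>:{0<..<2*pi}|lebesgue. norm (bracket \<theta> 0 b)) = norm b" by auto
qed

lemma int_cases_pi: "0 \<le> k \<Longrightarrow> 0 \<le> 2*pi*real_of_int k" "k \<le> -1 \<Longrightarrow> 2*pi*real_of_int k \<le> -2*pi"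
  for k :: int
proof -
  show "0 \<le> k \<Longrightarrow> 0 \<le> 2*pi*real_of_int k" using pi_gt_zero by simp
  assume "k \<le> -1"
  then have "real_of_int k \<le> -1" by simp
  have "2*pi*real_of_int k \<le> 2*pi*(-1)"
    using \<open>real_of_int k \<le> -1\<close> pi_gt_zero by (intro mult_left_mono) auto
  then show "2*pi*real_of_int k \<le> -2*pi" by simp
qed

lemma small_aux:
  fixes k :: int
  assumes b1: "-\<theta> < b" "b < \<theta>" "\<theta> - 2*pi < b" "b < 2*pi - \<theta>"
  shows "\<not> (0 \<le> \<theta> + 2*pi*k \<and> \<theta> + 2*pi*k \<le> b) \<and> \<not> (b \<le> \<theta> + 2*pi*k \<and> \<theta> + 2*pi*k \<le> 0)"
proof (cases "0 \<le> k")
  case True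
  then have h: "0 \<le> 2*pi*real_of_int k" by (rule int_cases_pi(1))
  then show ?thesis using b1 by linarith
next
  case False
  then have h: "2*pi*real_of_int k \<le> -2*pi" by (intro int_cases_pi(2)) simp
  then show ?thesis using b1 by linarith
qed

lemma bracket_small:
  assumes "0 < \<theta>" "\<theta> < 2*pi" "\<bar>b\<bar> < \<theta>" "\<bar>b\<bar> < 2*pi - \<theta>"
  shows "bracket \<theta> 0 b = 0"
proof -
  have b1: "-\<theta> < b" "b < \<theta>" "\<theta> - 2*pi < b" "b < 2*pi - \<theta>"
    using assms by auto
  note h = small_aux[OF b1]
  have e1: "{k::int. 0 < \<theta> + 2*pi*k \<and> \<theta> + 2*pi*k < b} = {}"
    using h by (auto dest: less_imp_le)
  have e2: "{k::int. 0 \<le> \<theta> + 2*pi*k \<and> \<theta> + 2*pi*k \<le> b} = {}"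
    using h by auto
  have e3: "{k::int. b < \<theta> + 2*pi*k \<and> \<theta> + 2*pi*k < 0} = {}"
    using h by (auto dest: less_imp_le)
  have e4: "{k::int. b \<le> \<theta> + 2*pi*k \<and> \<theta> + 2*pi*k \<le> 0} = {}"
    using h by auto
  show ?thesis unfolding bracket_def bracket0_def by (simp only: e1 e2 e3 e4 card.empty) simp
qed

lemma summable_transfer:
  fixes s u :: "nat \<Rightarrow> real"
  assumes ss: "summable (\<lambda>j. \<bar>s j\<bar>)"
    and fin: "\<And>x. x \<noteq> 0 \<Longrightarrow> finite {j. s j = x} \<and> card {j. s j = x} = card {j. u j = x} \<and> finite {j. u j = x}"
  shows "summable (\<lambda>j. \<bar>u j\<bar>)"
proof (rule summableI_nonneg_bounded)
  fix n
  define J where "J = {j. j < n \<and> u j \<noteq> 0}"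
  have finJ: "finite J" unfolding J_def by simp
  have "(\<Sum>i<n. \<bar>u i\<bar>) = (\<Sum>j\<in>J. \<bar>u j\<bar>)"
    unfolding J_def by (rule sum.mono_neutral_right) auto
  also have "\<dots> = (\<Sum>x\<in>u ` J. \<Sum>j\<in>{j. j \<in> J \<and> u j = x}. \<bar>u j\<bar>)"
    by (rule sum.image_gen[OF finJ])
  also have "\<dots> = (\<Sum>x\<in>u ` J. \<bar>x\<bar> * real (card {j. j \<in> J \<and> u j = x}))"
    by (intro sum.cong refl) simp
  also have "\<dots> \<le> (\<Sum>x\<in>u ` J. \<bar>x\<bar> * real (card {j. s j = x}))"
  proof (intro sum_mono mult_left_mono)
    fix x assume x: "x \<in> u ` J"
    then have "x \<noteq> 0" unfolding J_def by auto
    then have "finite {j. u j = x}" "card {j. s j = x} = card {j. u j = x}" using fin by auto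
    then show "real (card {j. j \<in> J \<and> u j = x}) \<le> real (card {j. s j = x})"
      by (simp add: card_mono[of "{j. u j = x}"] subset_iff)
  qed simp
  also have "\<dots> = (\<Sum>x\<in>u ` J. \<Sum>j\<in>{j. s j = x}. \<bar>s j\<bar>)"
    by (intro sum.cong refl) simp
  also have "\<dots> = (\<Sum>j\<in>(\<Union>x\<in>u ` J. {j. s j = x}). \<bar>s j\<bar>)"
  proof (rule sum.UNION_disjoint[symmetric])
    show "finite (u ` J)" using finJ by simp
    show "\<forall>x\<in>u ` J. finite {j. s j = x}" using fin unfolding J_def by auto
  qed auto
  also have "\<dots> \<le> (\<Sum>j. \<bar>s j\<bar>)"
  proof (rule sum_le_suminf[OF ss])
    show "finite (\<Union>x\<in>u ` J. {j. s j = x})" using fin finJ unfolding J_def by auto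
  qed auto
  finally show "(\<Sum>i<n. \<bar>u i\<bar>) \<le> (\<Sum>j. \<bar>s j\<bar>)" .
qed simp

lemma ecount_zero: "ecount s x = 0 \<Longrightarrow> s j \<noteq> x"
  unfolding ecount_def by (auto split: if_splits simp: zero_enat_def)

lemma ecount_fin: "ecount s x \<noteq> \<infinity> \<Longrightarrow> finite {j. s j = x}"
  unfolding ecount_def by (auto split: if_splits)

lemma ecount_eq_card: "ecount s x = ecount u x \<Longrightarrow> ecount s x \<noteq> \<infinity> \<Longrightarrow>
   finite {j. s j = x} \<and> card {j. s j = x} = card {j. u j = x} \<and> finite {j. u j = x}"
  unfolding ecount_def by (auto split: if_splits)

theorem mainTheorem12:
  fixes S :: "real \<Rightarrow> complex rigged" and St :: "real \<Rightarrow> real rigged"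
    and th :: "nat \<Rightarrow> real \<Rightarrow> real"
  assumes "rpath S1_T arcdist S" and "S 0 = base 1"
    and "rpath S1_R dist St" and "St 0 = base 0"
    and "\<forall>r\<in>{0..1}. pmap (St r) = S r"
    and "cont_enum St th"
  shows "mu th absolutely_integrable_on {0<..<2*pi}
    \<and> integral {0<..<2*pi} (mu th) = (\<Sum>j. th j 1)"
proof -
  define A where "A = {0<..<2*pi::real}"
  define b where "b = (\<lambda>j. th j 1)"
  have "\<forall>r\<in>{0..1}. St r \<in> S1_R" using assms(3) unfolding rpath_def by blast
  then have St1: "St 1 \<in> S1 UNIV dist 0" unfolding S1_R_def by simp
  then have S1c: "(\<forall>x. x \<noteq> 0 \<longrightarrow> St 1 x \<noteq> \<infinity> \<and> \<not> (x islimpt {y. St 1 y \<noteq> 0}))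
     \<and> rdist dist (St 1) (base 0) < \<infinity>"
    unfolding S1_def mem_Collect_eq by blast
  then have nin: "\<And>x. x \<noteq> 0 \<Longrightarrow> St 1 x \<noteq> \<infinity>" and rd: "rdist dist (St 1) (base 0) < \<infinity>"
    by blast+
  have ce: "\<And>r x. r \<in> {0..1} \<Longrightarrow> St r x = ecount (\<lambda>j. th j r) x + (if x = 0 then \<infinity> else 0)"
    using assms(6) unfolding cont_enum_def by blast
  have th0: "th j 0 = 0" for j
  proof (rule ccontr)
    assume h: "th j 0 \<noteq> 0"
    have "St 0 (th j 0) = 0" using h assms(4) by (simp add: base_def)
    then have "ecount (\<lambda>j. th j 0) (th j 0) = 0"
      using ce[of 0 "th j 0"] h by simp
    then show False using ecount_zero[of "\<lambda>j. th j 0" "th j 0" j] by simp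
  qed
  have "\<exists>st\<in>{(s, t). is_enum (St 1) s \<and> is_enum (base 0) t}.
      (\<Sum>j. ennreal (dist (fst st j) (snd st j))) < \<infinity>"
    using rd unfolding rdist_def INF_less_iff .
  then obtain st where st: "st \<in> {(s, t). is_enum (St 1) s \<and> is_enum (base 0) t}"
    and stlt: "(\<Sum>j. ennreal (dist (fst st j) (snd st j))) < \<infinity>"
    by blast
  define s where "s = fst st"
  have ens: "is_enum (St 1) s" and ent: "is_enum (base 0) (snd st)" using st unfolding s_def by (auto simp del: is_enum_def)
  have t0: "snd st j = 0" for j
  proof (rule ccontr)
    assume "snd st j \<noteq> 0"
    have "base 0 (snd st j) = ecount (snd st) (snd st j)" using ent unfolding is_enum_def by blast
    then have "ecount (snd st) (snd st j) = 0" using \<open>snd st j \<noteq> 0\<close> by (simp add: base_def)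
    then show False using ecount_zero[of "snd st" "snd st j" j] by simp
  qed
  have "(\<Sum>j. ennreal \<bar>s j\<bar>) \<noteq> top" using stlt t0 unfolding s_def by (simp add: dist_real_def)
  then have ss: "summable (\<lambda>j. \<bar>s j\<bar>)" by (intro summable_suminf_not_top) auto
  have sb: "summable (\<lambda>j. \<bar>b j\<bar>)"
  proof (rule summable_transfer[OF ss])
    fix x :: real assume x: "x \<noteq> 0"
    have e1: "St 1 x = ecount s x" using ens unfolding is_enum_def by auto
    have e2: "St 1 x = ecount b x" using ce[of 1 x] x unfolding b_def by simp
    show "finite {j. s j = x} \<and> card {j. s j = x} = card {j. b j = x} \<and> finite {j. b j = x}"
      using ecount_eq_card[of s x b] e1 e2 nin[OF x] by simp
  qed
  define G where "G = (\<lambda>j \<theta>. indicator A \<theta> * bracket \<theta> 0 (b j))"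
  have intG: "integrable lebesgue (G j)" for j
    using bracket_int(1)[of "b j"] unfolding set_integrable_def G_def A_def by simp
  have intGv: "integral\<^sup>L lebesgue (G j) = b j" for j
    using bracket_int(2)[of "b j"] unfolding set_lebesgue_integral_def G_def A_def by simp
  have intGn: "(\<integral>\<theta>. norm (G j \<theta>) \<partial>lebesgue) = \<bar>b j\<bar>" for j
  proof -
    have "(\<lambda>\<theta>. norm (G j \<theta>)) = (\<lambda>\<theta>. indicator A \<theta> *\<^sub>R norm (bracket \<theta> 0 (b j)))"
      unfolding G_def by (auto simp: indicator_def)
    then show ?thesis using bracket_int(3)[of "b j"] unfolding set_lebesgue_integral_def A_def by simp
  qed
  have b0: "b \<longlonglongrightarrow> 0"
  proof -
    have "(\<lambda>j. \<bar>b j\<bar>) \<longlonglongrightarrow> 0" by (rule summable_LIMSEQ_zero[OF sb])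
    then show ?thesis by (simp add: tendsto_rabs_zero_iff)
  qed
  have evz: "eventually (\<lambda>j. G j \<theta> = 0) sequentially" for \<theta>
  proof (cases "\<theta> \<in> A")
    case True
    then have pos: "0 < min \<theta> (2*pi - \<theta>)" unfolding A_def by auto
    have "eventually (\<lambda>j. dist (b j) 0 < min \<theta> (2*pi - \<theta>)) sequentially"
      using b0 pos by (rule tendstoD)
    then show ?thesis
    proof (rule eventually_mono)
      fix j assume "dist (b j) 0 < min \<theta> (2*pi - \<theta>)"
      then have "bracket \<theta> 0 (b j) = 0" using True unfolding A_def
        by (intro bracket_small) auto
      then show "G j \<theta> = 0" unfolding G_def by simp
    qed
  next
    case False
    then show ?thesis unfolding G_def by simp
  qed
  have sumG: "summable (\<lambda>j. norm (G j \<theta>))" for \<theta>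
  proof -
    have "eventually (\<lambda>j. norm (G j \<theta>) = 0) sequentially"
      using evz[of \<theta>] by (rule eventually_mono) simp
    then have "summable (\<lambda>j. norm (G j \<theta>)) = summable (\<lambda>j::nat. 0::real)" by (rule summable_cong)
    then show ?thesis by simp
  qed
  have sumG': "summable (\<lambda>j. G j \<theta>)" for \<theta>
  proof -
    have "eventually (\<lambda>j. G j \<theta> = 0) sequentially" by (rule evz)
    then have "summable (\<lambda>j. G j \<theta>) = summable (\<lambda>j::nat. 0::real)" by (rule summable_cong)
    then show ?thesis by simp
  qed
  have SI: "summable (\<lambda>j. \<integral>\<theta>. norm (G j \<theta>) \<partial>lebesgue)" unfolding intGn by (rule sb)
  have AEs: "AE \<theta> in lebesgue. summable (\<lambda>i. norm (G i \<theta>))"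
    by (rule AE_I2) (rule sumG)
  have I1: "integrable lebesgue (\<lambda>\<theta>. \<Sum>j. G j \<theta>)"
    by (rule integrable_suminf[OF intG AEs SI])
  have I2: "(\<integral>\<theta>. (\<Sum>j. G j \<theta>) \<partial>lebesgue) = (\<Sum>j. b j)"
    using integral_suminf[OF intG AEs SI] by (simp only: intGv)
  have eqmu: "(\<Sum>j. G j \<theta>) = indicator A \<theta> *\<^sub>R mu th \<theta>" for \<theta>
  proof (cases "\<theta> \<in> A")
    case True
    then show ?thesis unfolding G_def mu_def b_def by (simp add: th0)
  next
    case False
    then show ?thesis unfolding G_def by simp
  qed
  have feq: "(\<lambda>\<theta>. indicator A \<theta> *\<^sub>R mu th \<theta>) = (\<lambda>\<theta>. \<Sum>j. G j \<theta>)"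
    using eqmu by (intro ext) (rule sym)
  have SIm: "set_integrable lebesgue A (mu th)"
    unfolding set_integrable_def feq by (rule I1)
  have "integral A (mu th) = (LINT \<theta>:A|lebesgue. mu th \<theta>)"
    by (rule set_lebesgue_integral_eq_integral(2)[OF SIm, symmetric])
  also have "\<dots> = (\<Sum>j. b j)" unfolding set_lebesgue_integral_def feq by (rule I2)
  finally have "integral A (mu th) = (\<Sum>j. b j)" .
  then show ?thesis using SIm unfolding A_def b_def by blast
qed

end
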